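(* Let $P\in\mathbb{R}^N$ and $a\in\mathbb{R}$. If the equation $H(x,Du+P)=a$ in $\mathbb{R}^N$ admits a bounded $\mathbb{Z}^N$-periodic upper semicontinuous viscosity subsolution and a bounded $\mathbb{Z}^N$-periodic lower semicontinuous viscosity supersolution, then $a=\overline H(P)$.
   Context: $V:\mathbb{R}^N\to\mathbb{R}^N$ is $\mathbb{Z}^N$-periodic and Lipschitz continuous; $H(x,p)=|p|+p\cdot V(x)$. $\overline H(P)=\inf\{a\in\mathbb{R}\mid H(x,Du+P)=a$ admits an upper semicontinuous, bounded, $\mathbb{Z}^N$-periodic viscosity subsolution on $\mathbb{R}^N\}$. *)

theory Defs
  imports "HOL-Analysis.Analysis"
begin

definition int_vec :: "real^'n \<Rightarrow> bool" where
  "int_vec k \<longleftrightarrow> (\<forall>i. k $ i \<in> \<int>)"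

definition Zn_periodic :: "(real^'n \<Rightarrow> 'b) \<Rightarrow> bool" where
  "Zn_periodic f \<longleftrightarrow> (\<forall>x k. int_vec k \<longrightarrow> f (x + k) = f x)"

definition Ham :: "(real^'n \<Rightarrow> real^'n) \<Rightarrow> real^'n \<Rightarrow> real^'n \<Rightarrow> real" where
  "Ham V x p = norm p + p \<bullet> V x"

definition usc :: "(real^'n \<Rightarrow> real) \<Rightarrow> bool" where
  "usc u \<longleftrightarrow> (\<forall>x t. u x < t \<longrightarrow> eventually (\<lambda>y. u y < t) (at x))"

definition lsc :: "(real^'n \<Rightarrow> real) \<Rightarrow> bool" where
  "lsc u \<longleftrightarrow> (\<forall>x t. t < u x \<longrightarrow> eventually (\<lambda>y. t < u y) (at x))"

definition C1_grad :: "(real^'n \<Rightarrow> real) \<Rightarrow> (real^'n \<Rightarrow> real^'n) \<Rightarrow> bool" where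
  "C1_grad \<phi> g \<longleftrightarrow> (\<forall>x. (\<phi> has_derivative (\<lambda>h. g x \<bullet> h)) (at x)) \<and> continuous_on UNIV g"

definition visc_sub :: "(real^'n \<Rightarrow> real^'n) \<Rightarrow> real^'n \<Rightarrow> real \<Rightarrow> (real^'n \<Rightarrow> real) \<Rightarrow> bool" where
  "visc_sub V P a u \<longleftrightarrow>
     (\<forall>\<phi> g x0. C1_grad \<phi> g \<longrightarrow>
        (\<exists>e>0. \<forall>y\<in>ball x0 e. u y - \<phi> y \<le> u x0 - \<phi> x0) \<longrightarrow>
        Ham V x0 (g x0 + P) \<le> a)"

definition visc_super :: "(real^'n \<Rightarrow> real^'n) \<Rightarrow> real^'n \<Rightarrow> real \<Rightarrow> (real^'n \<Rightarrow> real) \<Rightarrow> bool" where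
  "visc_super V P a u \<longleftrightarrow>
     (\<forall>\<phi> g x0. C1_grad \<phi> g \<longrightarrow>
        (\<exists>e>0. \<forall>y\<in>ball x0 e. u y - \<phi> y \<ge> u x0 - \<phi> x0) \<longrightarrow>
        Ham V x0 (g x0 + P) \<ge> a)"

definition Hbar :: "(real^'n \<Rightarrow> real^'n) \<Rightarrow> real^'n \<Rightarrow> real" where
  "Hbar V P = Inf {a. \<exists>u. usc u \<and> bounded (range u) \<and> Zn_periodic u \<and> visc_sub V P a u}"

end

theory Submission
  imports Defs
begin



definition usco :: "('a::topological_space \<Rightarrow> real) \<Rightarrow> bool" where
  "usco f \<longleftrightarrow> (\<forall>z t. f z < t \<longrightarrow> (\<exists>U. open U \<and> z \<in> U \<and> (\<forall>y\<in>U. f y < t)))"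

lemma usco_attains:
  assumes "usco f" "compact S" "S \<noteq> {}"
  shows "\<exists>z\<in>S. \<forall>y\<in>S. f y \<le> f z"
proof (rule ccontr)
  assume "\<not> ?thesis"
  then have "\<forall>z\<in>S. \<exists>y\<in>S. f z < f y" by (meson not_le)
  then obtain Y where Y: "\<forall>z\<in>S. Y z \<in> S \<and> f z < f (Y z)" by metis
  have "\<forall>z\<in>S. \<exists>U. open U \<and> z \<in> U \<and> (\<forall>y\<in>U. f y < f (Y z))"
    using assms(1) Y unfolding usco_def by blast
  then obtain U where U: "\<forall>z\<in>S. open (U z) \<and> z \<in> U z \<and> (\<forall>y\<in>U z. f y < f (Y z))" by metis
  obtain K where K: "K \<subseteq> S" "finite K" "S \<subseteq> (\<Union>c\<in>K. U c)"
    using compactE_image[OF assms(2), of S U] U by blast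
  have "K \<noteq> {}" using K assms(3) by auto
  define m where "m = Max ((f \<circ> Y) ` K)"
  have "m \<in> (f \<circ> Y) ` K" unfolding m_def using K \<open>K \<noteq> {}\<close> by (intro Max_in) auto
  then obtain k where k: "k \<in> K" "f (Y k) = m" by auto
  have mge: "\<forall>k'\<in>K. f (Y k') \<le> m" unfolding m_def using K by (auto intro: Max_ge)
  have "Y k \<in> S" using Y K k by auto
  then obtain k' where "k' \<in> K" "Y k \<in> U k'" using K by auto
  then have "f (Y k) < f (Y k')" using U K by auto
  then show False using mge \<open>k' \<in> K\<close> k by auto
qed

lemma usco_add:
  assumes "usco f" "usco g" shows "usco (\<lambda>z. f z + g z)"
  unfolding usco_def
proof (intro allI impI)
  fix z t assume "f z + g z < t"
  define d where "d = (t - f z - g z) / 2"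
  have d: "d > 0" using \<open>f z + g z < t\<close> by (simp add: d_def)
  obtain U1 where U1: "open U1" "z \<in> U1" "\<forall>y\<in>U1. f y < f z + d"
    using assms(1) d unfolding usco_def by (meson less_add_same_cancel1)
  obtain U2 where U2: "open U2" "z \<in> U2" "\<forall>y\<in>U2. g y < g z + d"
    using assms(2) d unfolding usco_def by (meson less_add_same_cancel1)
  show "\<exists>U. open U \<and> z \<in> U \<and> (\<forall>y\<in>U. f y + g y < t)"
  proof (intro exI[of _ "U1 \<inter> U2"] conjI ballI)
    fix y assume "y \<in> U1 \<inter> U2"
    then have "f y < f z + d" "g y < g z + d" using U1 U2 by auto
    then show "f y + g y < t" using d_def \<open>f z + g z < t\<close> by argo
  qed (use U1 U2 in auto)
qed

lemma usco_cont:
  assumes "continuous_on UNIV f" shows "usco f"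
  unfolding usco_def
proof (intro allI impI)
  fix z t assume "f z < t"
  have "open {y. f y < t}" using assms by (intro open_Collect_less) (auto intro: continuous_intros)
  then show "\<exists>U. open U \<and> z \<in> U \<and> (\<forall>y\<in>U. f y < t)" using \<open>f z < t\<close> by (intro exI[of _ "{y. f y < t}"]) auto
qed

lemma usc_usco: "usc u \<Longrightarrow> usco u"
  unfolding usc_def usco_def
proof (intro allI impI)
  fix z t assume A: "\<forall>x t. u x < t \<longrightarrow> eventually (\<lambda>y. u y < t) (at x)" "u z < t"
  then have "eventually (\<lambda>y. u y < t) (at z)" by auto
  then obtain S where "open S" "z \<in> S" "\<forall>x\<in>S. x \<noteq> z \<longrightarrow> u x < t"
    unfolding eventually_at_topological by auto
  then show "\<exists>U. open U \<and> z \<in> U \<and> (\<forall>y\<in>U. u y < t)" using A(2) by (intro exI[of _ S]) auto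
qed

lemma lsc_usco: "lsc w \<Longrightarrow> usco (\<lambda>y. - w y)"
  unfolding lsc_def usco_def
proof (intro allI impI)
  fix z t assume A: "\<forall>x t. t < w x \<longrightarrow> eventually (\<lambda>y. t < w y) (at x)" "- w z < t"
  then have "eventually (\<lambda>y. -t < w y) (at z)" by auto
  then obtain S where "open S" "z \<in> S" "\<forall>x\<in>S. x \<noteq> z \<longrightarrow> -t < w x"
    unfolding eventually_at_topological by auto
  then show "\<exists>U. open U \<and> z \<in> U \<and> (\<forall>y\<in>U. - w y < t)" using A(2) by (intro exI[of _ S]) auto
qed

lemma usco_fst: fixes f :: "'a::topological_space \<Rightarrow> real" shows "usco f \<Longrightarrow> usco (\<lambda>z::'a::topological_space \<times> 'b::topological_space. f (fst z))"
  unfolding usco_def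
proof (intro allI impI)
  fix z :: "'a \<times> 'b" and t assume A: "\<forall>z t. f z < t \<longrightarrow> (\<exists>U. open U \<and> z \<in> U \<and> (\<forall>y\<in>U. f y < t))" "f (fst z) < t"
  then obtain U where "open U" "fst z \<in> U" "\<forall>y\<in>U. f y < t" by blast
  then show "\<exists>U. open U \<and> z \<in> U \<and> (\<forall>y\<in>U. f (fst y) < t)"
    by (intro exI[of _ "U \<times> UNIV"]) (auto intro: open_Times simp: mem_Times_iff)
qed

lemma usco_snd: fixes f :: "'b::topological_space \<Rightarrow> real" shows "usco f \<Longrightarrow> usco (\<lambda>z::'a::topological_space \<times> 'b::topological_space. f (snd z))"
  unfolding usco_def
proof (intro allI impI)
  fix z :: "'a \<times> 'b" and t assume A: "\<forall>z t. f z < t \<longrightarrow> (\<exists>U. open U \<and> z \<in> U \<and> (\<forall>y\<in>U. f y < t))" "f (snd z) < t"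
  then obtain U where "open U" "snd z \<in> U" "\<forall>y\<in>U. f y < t" by blast
  then show "\<exists>U. open U \<and> z \<in> U \<and> (\<forall>y\<in>U. f (snd y) < t)"
    by (intro exI[of _ "UNIV \<times> U"]) (auto intro: open_Times simp: mem_Times_iff)
qed

lemma telescope:
  fixes m :: "nat \<Rightarrow> real"
  assumes "\<And>k. m (Suc k) \<le> m k" "\<And>k. m 0 - m k \<le> C" "\<eta> > 0"
  shows "\<exists>k. m k - m (Suc k) \<le> \<eta>"
proof (rule ccontr)
  assume "\<not> ?thesis"
  then have H: "m k - m (Suc k) > \<eta>" for k by (metis not_le)
  have I: "m 0 - m n \<ge> real n * \<eta>" for n
  proof (induction n)
    case 0 then show ?case by simp
  next
    case (Suc n) then show ?case using H[of n] by (simp add: algebra_simps)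
  qed
  obtain n where "real n > C / \<eta>" using reals_Archimedean2 by blast
  then have "real n * \<eta> > C" using assms(3) by (simp add: field_simps)
  then show False using I[of n] assms(2)[of n] by linarith
qed


definition Phi :: "(real^'n \<Rightarrow> real) \<Rightarrow> (real^'n \<Rightarrow> real) \<Rightarrow> real \<Rightarrow> (real^'n) \<times> (real^'n) \<Rightarrow> real" where
  "Phi u w e z = u (fst z) - w (snd z) - ((fst z - snd z) \<bullet> (fst z - snd z)) / (2*e)"

lemma Phi_max:
  fixes u w :: "real^'n \<Rightarrow> real"
  assumes "usc u" "lsc w" "Zn_periodic u" "Zn_periodic w" "\<forall>x. \<bar>u x\<bar> \<le> B" "\<forall>x. \<bar>w x\<bar> \<le> B" "e > 0"
  shows "\<exists>z. \<forall>z'. Phi u w e z' \<le> Phi u w e z"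
proof -
  have eq: "Phi u w e = (\<lambda>z. (u (fst z) + - w (snd z)) + (- ((fst z - snd z) \<bullet> (fst z - snd z)) / (2*e)))"
    by (auto simp: Phi_def fun_eq_iff)
  have "usco (\<lambda>z::(real^'n) \<times> (real^'n). (u (fst z) + - w (snd z)) + (- ((fst z - snd z) \<bullet> (fst z - snd z)) / (2*e)))"
  proof -
    have a1: "usco (\<lambda>z::(real^'n) \<times> (real^'n). u (fst z))" by (rule usco_fst[OF usc_usco[OF assms(1)]])
    have a2: "usco (\<lambda>z::(real^'n) \<times> (real^'n). - w (snd z))" using usco_snd[OF lsc_usco[OF assms(2)]] .
    have a3: "usco (\<lambda>z::(real^'n) \<times> (real^'n). (- ((fst z - snd z) \<bullet> (fst z - snd z)) / (2*e)))"
      by (rule usco_cont) (intro continuous_intros, use assms(7) in auto)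
    show ?thesis using usco_add[OF usco_add[OF a1 a2] a3] .
  qed
  then have us: "usco (Phi u w e)" using eq by simp
  define C where "C = cbox (0::real^'n) (\<chi> i. 1)"
  define R where "R = 2*e*(4*B+1) + 1 + real CARD('n)"
  define S where "S = C \<times> cball (0::real^'n) R"
  have B0: "B \<ge> 0" using assms(5) by (meson abs_ge_zero order_trans)
  have "compact S" unfolding S_def C_def by (intro compact_Times compact_cbox compact_cball)
  have z00: "(0, 0) \<in> S" unfolding S_def C_def R_def using assms(7) B0 by (auto simp: mem_box_cart)
  then have "S \<noteq> {}" by auto
  obtain z0 where z0: "z0 \<in> S" "\<forall>y\<in>S. Phi u w e y \<le> Phi u w e z0"
    using usco_attains[OF us \<open>compact S\<close> \<open>S \<noteq> {}\<close>] by blast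
  have low: "Phi u w e z0 \<ge> -2*B"
  proof -
    have b: "\<bar>u 0\<bar> \<le> B" "\<bar>w 0\<bar> \<le> B" using assms(5,6) by blast+
    have "Phi u w e (0,0) = u 0 - w 0" by (simp add: Phi_def)
    then have "Phi u w e (0,0) \<ge> -2*B" using b unfolding abs_le_iff by linarith
    moreover have "Phi u w e (0,0) \<le> Phi u w e z0" using z0(2) z00 by blast
    ultimately show ?thesis by linarith
  qed
  show ?thesis
  proof (intro exI allI)
    fix z' :: "(real^'n) \<times> (real^'n)"
    obtain x y where z': "z' = (x, y)" by fastforce
    define k :: "real^'n" where "k = (\<chi> i. of_int \<lfloor>x$i\<rfloor>)"
    have ik: "int_vec k" unfolding int_vec_def k_def by auto
    define x' where "x' = x - k"
    define y' where "y' = y - k"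
    have xC: "x' \<in> C" unfolding C_def mem_box_cart
    proof (intro allI conjI)
      fix i
      have h: "real_of_int \<lfloor>x$i\<rfloor> \<le> x$i" "x$i < real_of_int \<lfloor>x$i\<rfloor> + 1" by simp_all
      have e: "x'$i = x$i - real_of_int \<lfloor>x$i\<rfloor>" unfolding x'_def k_def by simp
      show "(0::real^'n)$i \<le> x'$i" using h e by simp
      show "x'$i \<le> ((\<chi> i. 1)::real^'n)$i" using h e by (simp del: real_of_int_floor_add_one_gt)
    qed
    have "u x = u x'" using assms(3) ik unfolding Zn_periodic_def x'_def by (metis diff_add_cancel)
    moreover have "w y = w y'" using assms(4) ik unfolding Zn_periodic_def y'_def by (metis diff_add_cancel)
    moreover have "x - y = x' - y'" unfolding x'_def y'_def by simp
    ultimately have peq: "Phi u w e z' = Phi u w e (x', y')" unfolding z' Phi_def by simp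
    show "Phi u w e z' \<le> Phi u w e z0"
    proof (cases "norm y' \<le> R")
      case True
      then have "(x', y') \<in> S" unfolding S_def using xC by auto
      then show ?thesis using z0 peq by auto
    next
      case False
      have "norm x' \<le> (\<Sum>i\<in>UNIV. \<bar>x'$i\<bar>)" by (rule norm_le_l1_cart)
      also have "\<dots> \<le> (\<Sum>i\<in>(UNIV::'n set). 1)"
        using xC unfolding C_def mem_box_cart by (intro sum_mono) auto
      finally have nx: "norm x' \<le> real CARD('n)" by simp
      have "norm (x' - y') \<ge> norm y' - norm x'" using norm_triangle_ineq2[of y' x'] norm_minus_commute[of y' x'] by linarith
      then have d1: "norm (x' - y') > 2*e*(4*B+1)" "norm (x' - y') \<ge> 1"
        using False nx \<open>e > 0\<close> B0 mult_nonneg_nonneg[of "2*e" "4*B+1"] unfolding R_def by linarith+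
      have "(x' - y') \<bullet> (x' - y') = norm (x' - y') * norm (x' - y')"
        by (simp add: power2_norm_eq_inner[symmetric] power2_eq_square)
      also have "\<dots> \<ge> norm (x' - y')" using d1(2) by (simp add: mult_le_cancel_left1)
      finally have "(x' - y') \<bullet> (x' - y') > 2*e*(4*B+1)" using d1(1) by linarith
      then have "((x' - y') \<bullet> (x' - y')) / (2*e) > 4*B+1" using assms(7) by (simp add: field_simps)
      moreover have "u x' - w y' \<le> 2*B"
      proof -
        have b: "\<bar>u x'\<bar> \<le> B" "\<bar>w y'\<bar> \<le> B" using assms(5,6) by blast+
        then show ?thesis unfolding abs_le_iff by linarith
      qed
      ultimately have "Phi u w e (x', y') < -2*B" unfolding Phi_def by simp
      then show ?thesis using peq low by simp
    qed
  qed
qed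


lemma C1_sub:
  fixes y0 :: "real^'n" assumes "e > 0"
  shows "C1_grad (\<lambda>x. ((x - y0) \<bullet> (x - y0)) / (2*e)) (\<lambda>x. (1/e) *\<^sub>R (x - y0))"
  unfolding C1_grad_def
proof (intro conjI allI)
  fix x :: "real^'n"
  show "((\<lambda>x. ((x - y0) \<bullet> (x - y0)) / (2*e)) has_derivative (\<lambda>h. ((1/e) *\<^sub>R (x - y0)) \<bullet> h)) (at x)"
    using assms by (auto intro!: derivative_eq_intros simp: fun_eq_iff inner_commute field_simps inner_diff_right)
  show "continuous_on UNIV (\<lambda>x. (1/e) *\<^sub>R (x - y0))" by (intro continuous_intros)
qed

lemma C1_super:
  fixes x0 :: "real^'n" assumes "e > 0"
  shows "C1_grad (\<lambda>y. - ((x0 - y) \<bullet> (x0 - y)) / (2*e)) (\<lambda>y. (1/e) *\<^sub>R (x0 - y))"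
  unfolding C1_grad_def
proof (intro conjI allI)
  fix x :: "real^'n"
  show "((\<lambda>y. - ((x0 - y) \<bullet> (x0 - y)) / (2*e)) has_derivative (\<lambda>h. ((1/e) *\<^sub>R (x0 - x)) \<bullet> h)) (at x)"
    using assms by (auto intro!: derivative_eq_intros simp: fun_eq_iff inner_commute field_simps inner_diff_right)
  show "continuous_on UNIV (\<lambda>y. (1/e) *\<^sub>R (x0 - y))" by (intro continuous_intros)
qed



lemma Phi_mono:
  assumes "0 < e1" "e1 \<le> e2"
  shows "Phi u w e1 z \<le> Phi u w e2 z"
proof -
  have q: "(fst z - snd z) \<bullet> (fst z - snd z) \<ge> 0" by simp
  have "((fst z - snd z) \<bullet> (fst z - snd z)) / (2*e2) \<le> ((fst z - snd z) \<bullet> (fst z - snd z)) / (2*e1)"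
    using assms q by (intro divide_left_mono) auto
  then show ?thesis unfolding Phi_def by linarith
qed

lemma key:
  fixes V :: "real^'n \<Rightarrow> real^'n" and u w :: "real^'n \<Rightarrow> real"
  assumes L: "L-lipschitz_on UNIV V"
    and u: "usc u" "bounded (range u)" "Zn_periodic u" "visc_sub V P b u"
    and w: "lsc w" "bounded (range w)" "Zn_periodic w" "visc_super V P a w"
  shows "a \<le> b"
proof (rule ccontr)
  assume "\<not> a \<le> b"
  then have ab: "a - b > 0" by simp
  have L0: "L \<ge> 0" using L by (rule lipschitz_on_nonneg)
  obtain B1 where B1: "\<forall>x. \<bar>u x\<bar> \<le> B1" using u(2) unfolding bounded_iff by auto
  obtain B2 where B2: "\<forall>x. \<bar>w x\<bar> \<le> B2" using w(2) unfolding bounded_iff by auto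
  define B where "B = max B1 B2"
  have Bu: "\<forall>x. \<bar>u x\<bar> \<le> B" and Bw: "\<forall>x. \<bar>w x\<bar> \<le> B" using B1 B2 unfolding B_def by (meson max.coboundedI1 max.coboundedI2 order_trans)+
  define zo where "zo e = (SOME z. \<forall>z'. Phi u w e z' \<le> Phi u w e z)" for e
  define M where "M e = Phi u w e (zo e)" for e
  have zo: "\<forall>z'. Phi u w e z' \<le> M e" if "e > 0" for e
    unfolding M_def zo_def using someI_ex[OF Phi_max[OF u(1) w(1) u(3) w(3) Bu Bw that]] .
  have Mmono: "M e1 \<le> M e2" if "0 < e1" "e1 \<le> e2" for e1 e2
  proof -
    have "M e1 \<le> Phi u w e2 (zo e1)" unfolding M_def using Phi_mono[OF that] .
    also have "\<dots> \<le> M e2" using zo[of e2] that by (meson dual_order.strict_trans1)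
    finally show ?thesis .
  qed
  have Mub: "M e \<le> 2*B" if "e > 0" for e
  proof -
    define z where "z = zo e"
    have q: "(fst z - snd z) \<bullet> (fst z - snd z) / (2*e) \<ge> 0"
      using that by (intro divide_nonneg_pos) auto
    have "\<bar>u (fst z)\<bar> \<le> B" "\<bar>w (snd z)\<bar> \<le> B" using Bu Bw by blast+
    then show ?thesis using q unfolding M_def z_def[symmetric] Phi_def abs_le_iff by linarith
  qed
  have Mlb: "M e \<ge> -2*B" if "e > 0" for e
  proof -
    have "Phi u w e (0,0) \<le> M e" using zo[OF that] by blast
    moreover have "Phi u w e (0,0) = u 0 - w 0" by (simp add: Phi_def)
    moreover have "\<bar>u 0\<bar> \<le> B" "\<bar>w 0\<bar> \<le> B" using Bu Bw by blast+
    ultimately show ?thesis unfolding abs_le_iff by linarith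
  qed
  define K where "K = L * (4 + 2*norm P)"
  have K0: "K \<ge> 0" unfolding K_def using L0 by simp
  define \<theta> where "\<theta> = min 1 ((a-b)/(2*(K+1)))"
  have th: "0 < \<theta>" "\<theta> \<le> 1" "\<theta> \<le> (a-b)/(2*(K+1))" unfolding \<theta>_def using ab K0 by auto
  define m where "m k = M (1/2^k)" for k::nat
  have m1: "m (Suc k) \<le> m k" for k unfolding m_def by (rule Mmono) (auto simp: field_simps)
  have m2: "m 0 - m k \<le> 4*B" for k unfolding m_def using Mub[of 1] Mlb[of "1/2^k"] by simp
  obtain k where k: "m k - m (Suc k) \<le> \<theta>^2" using telescope[OF m1 m2, of "\<theta>^2"] th by auto
  define e :: real where "e = 1/2^(Suc k)"
  have e1: "e > 0" "2*e = 1/2^k" unfolding e_def by (auto simp: field_simps)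
  have "(1::real) \<le> 2^(Suc k)" by (rule one_le_power) simp
  then have e2: "e \<le> 1" unfolding e_def by (simp add: divide_le_eq)
  note e = e1(1) e2 e1(2)
  obtain x0 y0 where z: "zo e = (x0,y0)" by fastforce
  define q where "q = (x0-y0)\<bullet>(x0-y0)"
  have q0: "q \<ge> 0" unfolding q_def by simp
  have Me: "M e = u x0 - w y0 - q/(2*e)" by (simp add: M_def z Phi_def q_def)
  have "Phi u w (2*e) (x0,y0) \<le> M (2*e)" using zo[of "2*e"] e by simp
  moreover have "Phi u w (2*e) (x0,y0) = u x0 - w y0 - q/(2*(2*e))" by (simp add: Phi_def q_def)
  moreover have "M (2*e) = m k" "M e = m (Suc k)" unfolding m_def e_def by (simp_all add: field_simps)
  ultimately have "q/(2*e) - q/(2*(2*e)) \<le> \<theta>^2" using k Me by linarith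
  moreover have "q/(2*e) - q/(2*(2*e)) = (q/e)/4" using e(1) by (simp add: field_simps)
  ultimately have qe: "q/e \<le> 4*\<theta>^2" by linarith
  have "q \<le> q/e" using e q0 by (simp add: le_divide_eq mult_left_le)
  define d where "d = norm (x0 - y0)"
  have d0: "d \<ge> 0" unfolding d_def by simp
  have qd: "q = d^2" unfolding q_def d_def by (simp add: power2_norm_eq_inner)
  have "d^2 \<le> (2*\<theta>)^2" using qe \<open>q \<le> q/e\<close> qd by (simp add: power_mult_distrib)
  then have dth: "d \<le> 2*\<theta>" by (rule power2_le_imp_le) (use th in simp)
  have lm: "u y - (y-y0)\<bullet>(y-y0)/(2*e) \<le> u x0 - (x0-y0)\<bullet>(x0-y0)/(2*e)" for y
  proof -
    have "Phi u w e (y,y0) \<le> M e" using zo[OF e(1)] by blast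
    then show ?thesis using Me unfolding q_def Phi_def by simp
  qed
  have "\<exists>\<epsilon>>0. \<forall>y\<in>ball x0 \<epsilon>. u y - (y-y0)\<bullet>(y-y0)/(2*e) \<le> u x0 - (x0-y0)\<bullet>(x0-y0)/(2*e)"
    using lm by (intro exI[of _ 1]) auto
  from u(4)[unfolded visc_sub_def, rule_format, OF C1_sub[OF e(1), of y0] this]
  have Hsub: "Ham V x0 ((1/e) *\<^sub>R (x0-y0) + P) \<le> b" .
  have lm2: "w y - (- ((x0-y)\<bullet>(x0-y)) / (2*e)) \<ge> w y0 - (- ((x0-y0)\<bullet>(x0-y0)) / (2*e))" for y
  proof -
    have "Phi u w e (x0,y) \<le> M e" using zo[OF e(1)] by blast
    then show ?thesis using Me unfolding q_def Phi_def by simp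
  qed
  have "\<exists>\<epsilon>>0. \<forall>y\<in>ball y0 \<epsilon>. w y - (- ((x0-y)\<bullet>(x0-y)) / (2*e)) \<ge> w y0 - (- ((x0-y0)\<bullet>(x0-y0)) / (2*e))"
    using lm2 by (intro exI[of _ 1]) auto
  from w(4)[unfolded visc_super_def, rule_format, OF C1_super[OF e(1), of x0] this]
  have Hsup: "Ham V y0 ((1/e) *\<^sub>R (x0-y0) + P) \<ge> a" .
  define p where "p = (1/e) *\<^sub>R (x0-y0) + P"
  have "norm p + p \<bullet> V x0 \<le> b" "norm p + p \<bullet> V y0 \<ge> a" using Hsub Hsup unfolding p_def Ham_def by auto
  then have "a - b \<le> p \<bullet> (V y0 - V x0)" by (simp add: inner_diff_right)
  also have "\<dots> \<le> norm p * norm (V y0 - V x0)" by (rule norm_cauchy_schwarz)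
  also have "\<dots> \<le> norm p * (L * d)"
  proof (rule mult_left_mono)
    show "norm (V y0 - V x0) \<le> L * d"
      using lipschitz_onD[OF L, of y0 x0] unfolding d_def dist_norm by (simp add: norm_minus_commute)
  qed simp
  also have "\<dots> \<le> (d/e + norm P) * (L * d)"
  proof (rule mult_right_mono)
    have "norm p \<le> norm ((1/e) *\<^sub>R (x0-y0)) + norm P" unfolding p_def by (rule norm_triangle_ineq)
    also have "norm ((1/e) *\<^sub>R (x0-y0)) = d/e" unfolding d_def using e(1) by simp
    finally show "norm p \<le> d/e + norm P" .
  qed (use L0 d0 in simp)
  also have "\<dots> = L * (q/e) + L * norm P * d" using qd by (simp add: algebra_simps power2_eq_square)
  also have "\<dots> \<le> L * (4*\<theta>^2) + L * norm P * (2*\<theta>)"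
    using qe dth L0 by (intro add_mono mult_left_mono) auto
  also have "\<dots> \<le> L * (4*\<theta>) + L * norm P * (2*\<theta>)"
  proof -
    have "\<theta>^2 \<le> \<theta>" using th by (simp add: power2_eq_square mult_left_le_one_le)
    then show ?thesis using L0 by (intro add_mono mult_left_mono) auto
  qed
  also have "\<dots> = K * \<theta>" unfolding K_def by (simp add: algebra_simps)
  also have "\<dots> \<le> K * ((a-b)/(2*(K+1)))" using K0 th by (intro mult_left_mono) auto
  also have "\<dots> \<le> (a-b)/2"
  proof -
    have "K * ((a-b)/(2*(K+1))) = (a-b)/2 * (K/(K+1))" by (simp add: field_simps)
    also have "\<dots> \<le> (a-b)/2 * 1" using K0 ab by (intro mult_left_mono) auto
    finally show ?thesis by simp
  qed
  finally show False using ab by argo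
qed


theorem lemma6p10:
  fixes V :: "real^'n \<Rightarrow> real^'n" and P :: "real^'n" and a :: real
  assumes "Zn_periodic V"
    and "\<exists>L. L-lipschitz_on UNIV V"
    and "\<exists>u. usc u \<and> bounded (range u) \<and> Zn_periodic u \<and> visc_sub V P a u"
    and "\<exists>w. lsc w \<and> bounded (range w) \<and> Zn_periodic w \<and> visc_super V P a w"
  shows "a = Hbar V P"
proof -
  obtain L where L: "L-lipschitz_on UNIV V" using assms(2) by blast
  obtain w where w: "lsc w" "bounded (range w)" "Zn_periodic w" "visc_super V P a w" using assms(4) by blast
  have mem: "a \<in> {a. \<exists>u. usc u \<and> bounded (range u) \<and> Zn_periodic u \<and> visc_sub V P a u}" using assms(3) by simp
  have lb: "a \<le> c" if "c \<in> {a. \<exists>u. usc u \<and> bounded (range u) \<and> Zn_periodic u \<and> visc_sub V P a u}" for c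
  proof -
    from that obtain u where u: "usc u" "bounded (range u)" "Zn_periodic u" "visc_sub V P c u" by blast
    show ?thesis by (rule key[OF L u w])
  qed
  show ?thesis unfolding Hbar_def by (rule cInf_eq_minimum[OF mem lb, symmetric])
qed

end
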